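(* Every almost zero-dimensional space that is rim-$\sigma$-compact, or that is rational, is zero-dimensional.
   Context: All spaces are separable and metrizable. A subset $A$ of $X$ is a C-set in $X$ if it is an intersection of clopen subsets of $X$. $X$ is almost zero-dimensional if every point has a neighborhood basis consisting of C-sets in $X$. $X$ is rim-$\sigma$-compact if it has a basis of open sets with $\sigma$-compact boundaries, and rational if it has a basis of open sets with countable boundaries. *)

theory Defs
  imports "HOL-Analysis.Analysis"
begin

definition C_set :: "'a topology \<Rightarrow> 'a set \<Rightarrow> bool" where
  "C_set X A \<longleftrightarrow>
     (\<exists>\<U>. (\<forall>U\<in>\<U>. closedin X U \<and> openin X U) \<and> A = topspace X \<inter> \<Inter>\<U>)"

definition almost_zero_dimensional :: "'a topology \<Rightarrow> bool" where
  "almost_zero_dimensional X \<longleftrightarrow> neighbourhood_base_of (C_set X) X"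

definition sigma_compactin :: "'a topology \<Rightarrow> 'a set \<Rightarrow> bool" where
  "sigma_compactin X S \<longleftrightarrow>
     (\<exists>\<K>. countable \<K> \<and> (\<forall>K\<in>\<K>. compactin X K) \<and> \<Union>\<K> = S)"

definition rim_sigma_compact :: "'a topology \<Rightarrow> bool" where
  "rim_sigma_compact X \<longleftrightarrow>
     (\<exists>\<B>. (\<forall>B\<in>\<B>. openin X B \<and> sigma_compactin X (X frontier_of B)) \<and>
          (\<forall>U x. openin X U \<and> x \<in> U \<longrightarrow> (\<exists>B\<in>\<B>. x \<in> B \<and> B \<subseteq> U)))"

definition rational_space :: "'a topology \<Rightarrow> bool" where
  "rational_space X \<longleftrightarrow>
     (\<exists>\<B>. (\<forall>B\<in>\<B>. openin X B \<and> countable (X frontier_of B)) \<and>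
          (\<forall>U x. openin X U \<and> x \<in> U \<longrightarrow> (\<exists>B\<in>\<B>. x \<in> B \<and> B \<subseteq> U)))"

end

theory Submission
  imports Defs
begin

lemma metric_sep_base:
  assumes "metrizable_space X" "separable_space X"
  shows "\<exists>\<B>. countable \<B> \<and> (\<forall>V\<in>\<B>. openin X V) \<and>
           (\<forall>U x. openin X U \<and> x \<in> U \<longrightarrow> (\<exists>V\<in>\<B>. x \<in> V \<and> V \<subseteq> U))"
proof -
  obtain M d where md: "Metric_space M d" and X: "X = Metric_space.mtopology M d"
    using assms(1) metrizable_space_def by blast
  interpret Metric_space M d by (rule md)
  obtain C where C: "countable C" "C \<subseteq> M" "mtopology closure_of C = M"
    using assms(2) unfolding separable_space_def X by auto
  define \<B> where "\<B> = (\<lambda>(c,n::nat). mball c (1 / Suc n)) ` (C \<times> UNIV)"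
  have cnt: "countable \<B>" unfolding \<B>_def using C(1) by auto
  have opn: "\<forall>V\<in>\<B>. openin X V" unfolding \<B>_def X by auto
  have bas: "\<exists>V\<in>\<B>. x \<in> V \<and> V \<subseteq> U" if oU: "openin X U" and xU: "x \<in> U" for U x
  proof -
    have UM: "openin mtopology U" using oU X by simp
    then have xM: "x \<in> M" using xU openin_subset by fastforce
    obtain r where r: "r > 0" "mball x r \<subseteq> U" using UM xU unfolding openin_mtopology by blast
    obtain n :: nat where n0: "inverse (real (Suc n)) < r/2"
      using reals_Archimedean[of "r/2"] r(1) by auto
    have n: "1 / real (Suc n) < r/2" using n0 by (simp add: inverse_eq_divide)
    have "x \<in> mtopology closure_of C" using C(3) xM by simp
    then have "\<forall>e>0. \<exists>y\<in>C. y \<in> mball x e" unfolding metric_closure_of by blast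
    moreover have "(0::real) < 1 / real (Suc n)" by simp
    ultimately obtain c where c: "c \<in> C" "c \<in> mball x (1 / Suc n)" by blast
    have cM: "c \<in> M" using c C by auto
    have "x \<in> mball c (1 / Suc n)" using c xM cM commute by auto
    moreover have "mball c (1 / Suc n) \<subseteq> mball x r"
      by (rule mball_subset) (use c n xM cM commute[of c x] in auto)
    moreover have "mball c (1 / Suc n) \<in> \<B>" unfolding \<B>_def using c by auto
    ultimately show ?thesis using r by blast
  qed
  show ?thesis
    by (rule exI[of _ \<B>]) (use cnt opn bas in blast)
qed

lemma clopen_sep:
  assumes "compactin X K" "C_set X S" "K \<inter> S = {}"
  shows "\<exists>R. closedin X R \<and> openin X R \<and> K \<subseteq> R \<and> R \<inter> S = {}"
proof -
  obtain \<U> where U: "\<forall>U\<in>\<U>. closedin X U \<and> openin X U" "S = topspace X \<inter> \<Inter>\<U>"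
    using assms(2) unfolding C_set_def by blast
  have Kt: "K \<subseteq> topspace X" using assms(1) compactin_subset_topspace by blast
  define \<V> where "\<V> = (\<lambda>U. topspace X - U) ` \<U>"
  have cov: "K \<subseteq> \<Union>\<V>"
  proof
    fix k assume k: "k \<in> K"
    then have "k \<notin> S" using assms(3) by blast
    then obtain U where "U \<in> \<U>" "k \<notin> U" using U(2) Kt k by blast
    then show "k \<in> \<Union>\<V>" using Kt k unfolding \<V>_def by blast
  qed
  have Vo: "\<forall>V\<in>\<V>. openin X V" unfolding \<V>_def using U(1) by blast
  have "\<exists>F. finite F \<and> F \<subseteq> \<V> \<and> K \<subseteq> \<Union>F"
    using assms(1) cov Vo unfolding compactin_def by blast
  then obtain F where F: "finite F" "F \<subseteq> \<V>" "K \<subseteq> \<Union>F" by blast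
  have Vc: "\<forall>V\<in>\<V>. closedin X V" unfolding \<V>_def using U(1) by blast
  have "closedin X (\<Union>F)"
    by (rule closedin_Union) (use F Vc in blast)+
  moreover have "openin X (\<Union>F)"
    by (rule openin_Union) (use F Vo in blast)
  moreover have "\<Union>F \<inter> S = {}" using F(2) U(2) unfolding \<V>_def by blast
  ultimately show ?thesis using F(3) by blast
qed


lemma rational_imp_rim:
  assumes "rational_space X" shows "rim_sigma_compact X"
proof -
  obtain \<B> where B: "\<forall>B\<in>\<B>. openin X B \<and> countable (X frontier_of B)"
    "\<forall>U x. openin X U \<and> x \<in> U \<longrightarrow> (\<exists>B\<in>\<B>. x \<in> B \<and> B \<subseteq> U)"
    using assms unfolding rational_space_def apply (elim exE conjE) apply (rule that) apply assumption+ done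
  have "sigma_compactin X (X frontier_of B)" if "B \<in> \<B>" for B
    unfolding sigma_compactin_def
  proof (intro exI conjI ballI)
    have "countable (X frontier_of B)" using B(1) that by blast
    then show "countable ((\<lambda>s. {s}) ` (X frontier_of B))" by (rule countable_image)
    show "compactin X K" if KK: "K \<in> (\<lambda>s. {s}) ` (X frontier_of B)" for K
    proof -
      obtain s where "s \<in> X frontier_of B" "K = {s}" using KK by blast
      then show ?thesis using frontier_of_subset_topspace[of X B] by auto
    qed
    show "\<Union>((\<lambda>s. {s}) ` (X frontier_of B)) = X frontier_of B" by blast
  qed
  then show ?thesis unfolding rim_sigma_compact_def
    by (intro exI[of _ \<B>] conjI ballI) (use B in auto)
qed

theorem corollary4p6:
  fixes X :: "'a topology"
  assumes "metrizable_space X" and "separable_space X"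
    and "almost_zero_dimensional X"
    and "rim_sigma_compact X \<or> rational_space X"
  shows "X dim_le 0"
proof -
  have rim: "rim_sigma_compact X" using assms(4) rational_imp_rim by blast
  obtain \<B>b where Bb: "countable \<B>b" "\<forall>V\<in>\<B>b. openin X V"
    "\<forall>U x. openin X U \<and> x \<in> U \<longrightarrow> (\<exists>V\<in>\<B>b. x \<in> V \<and> V \<subseteq> U)"
    using metric_sep_base[OF assms(1,2)] apply (elim exE conjE) apply (rule that) apply assumption+ done
  obtain \<B> where Bs: "\<forall>B\<in>\<B>. openin X B \<and> sigma_compactin X (X frontier_of B)"
    "\<forall>U x. openin X U \<and> x \<in> U \<longrightarrow> (\<exists>B\<in>\<B>. x \<in> B \<and> B \<subseteq> U)"
    using rim unfolding rim_sigma_compact_def apply (elim exE conjE) apply (rule that) apply assumption+ done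
  have azd: "\<forall>W y. openin X W \<and> y \<in> W \<longrightarrow> (\<exists>V A. openin X V \<and> C_set X A \<and> y \<in> V \<and> V \<subseteq> A \<and> A \<subseteq> W)"
    using assms(3) unfolding almost_zero_dimensional_def neighbourhood_base_of by assumption
  show ?thesis
    unfolding dimension_le_0_neighbourhood_base_of_clopen neighbourhood_base_of
  proof (intro allI impI)
    fix U x assume Ux: "openin X U \<and> x \<in> U"
    then obtain B where BB: "B \<in> \<B>" "x \<in> B" "B \<subseteq> U"
      using Bs(2) by blast
    have B12: "openin X B \<and> sigma_compactin X (X frontier_of B)"
      using Bs(1) BB(1) by (rule bspec)
    have B: "openin X B" "sigma_compactin X (X frontier_of B)" "x \<in> B" "B \<subseteq> U"
      using B12 BB by simp_all
    obtain \<K> where K: "countable \<K>" "\<forall>K\<in>\<K>. compactin X K" "\<Union>\<K> = X frontier_of B"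
      using B(2) unfolding sigma_compactin_def apply (elim exE conjE) apply (rule that) apply assumption+ done
    define K where "K n = from_nat_into (insert {} \<K>) n" for n
    have Kc: "compactin X (K n)" for n
      using from_nat_into[of "insert {} \<K>" n] K(2) unfolding K_def by auto
    have Krange: "range K = insert {} \<K>" unfolding K_def using K(1) by simp
    have Kfr: "X frontier_of B = (\<Union>n. K n)"
    proof -
      have "(\<Union>n. K n) = \<Union>(insert {} \<K>)" using Krange by simp
      then show ?thesis using K(3) by simp
    qed
    define \<C> where "\<C> = {b \<in> \<B>b. \<exists>A. C_set X A \<and> b \<subseteq> A \<and> A \<subseteq> B}"
    have Ccount: "countable \<C>" unfolding \<C>_def by (rule countable_subset[OF _ Bb(1)]) blast
    have Ccov: "\<exists>b\<in>\<C>. y \<in> b" if yB: "y \<in> B" for y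
    proof -
      obtain V A where VA: "openin X V" "C_set X A" "y \<in> V" "V \<subseteq> A" "A \<subseteq> B"
        using azd[rule_format, of B y] B(1) yB by blast
      obtain b where "b \<in> \<B>b" "y \<in> b" "b \<subseteq> V" using Bb(3)[rule_format, of V y] VA by blast
      then show ?thesis unfolding \<C>_def using VA by blast
    qed
    have "\<forall>b\<in>\<C>. \<exists>A. C_set X A \<and> b \<subseteq> A \<and> A \<subseteq> B"
      unfolding \<C>_def by blast
    from bchoice[OF this] obtain Af where Af: "\<forall>b\<in>\<C>. C_set X (Af b) \<and> b \<subseteq> Af b \<and> Af b \<subseteq> B"
      by blast
    have Cne: "\<C> \<noteq> {}" using Ccov B(3) by blast
    define e where "e i = from_nat_into \<C> i" for i
    have eC: "e i \<in> \<C>" for i using from_nat_into[OF Cne] e_def by simp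
    have erange: "range e = \<C>" unfolding e_def using Cne Ccount by simp
    define A where "A i = Af (e i)" for i
    have Aprop: "C_set X (A i)" "e i \<subseteq> A i" "A i \<subseteq> B" for i
      using Af eC A_def by auto
    have eopen: "openin X (e i)" for i using eC Bb(2) unfolding \<C>_def by blast
    have ecov: "\<exists>i. y \<in> e i" if "y \<in> B" for y using Ccov[OF that] erange by blast
    obtain j0 where j0: "x \<in> e j0" using ecov B(3) by blast
    have disj: "K n \<inter> A i = {}" for n i
    proof -
      have "K n \<subseteq> X frontier_of B" using Kfr by blast
      moreover have "X frontier_of B \<inter> B = {}"
        using B(1) by (simp add: frontier_of_def interior_of_openin) blast
      ultimately show ?thesis using Aprop(3)[of i] by blast
    qed
    have ex: "\<exists>R. closedin X R \<and> openin X R \<and> K n \<subseteq> R \<and> R \<inter> A i = {}" for n i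
      using clopen_sep[OF Kc Aprop(1) disj] by blast
    define Rf where "Rf n i = (SOME R. closedin X R \<and> openin X R \<and> K n \<subseteq> R \<and> R \<inter> A i = {})" for n i
    have Rf: "closedin X (Rf n i) \<and> openin X (Rf n i) \<and> K n \<subseteq> Rf n i \<and> Rf n i \<inter> A i = {}" for n i
      unfolding Rf_def by (rule someI_ex[OF ex])
    define R where "R n = \<Inter>(Rf n ` insert j0 {..n})" for n
    have Rclosed: "closedin X (R n)" for n unfolding R_def
      by (rule closedin_Inter) (use Rf in auto)
    have Ropen: "openin X (R n)" for n unfolding R_def
      by (rule openin_Inter) (use Rf in auto)
    have KR: "K n \<subseteq> R n" for n unfolding R_def using Rf by blast
    have RA: "R n \<inter> A i = {}" if "i \<le> n \<or> i = j0" for n i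
      unfolding R_def using Rf[of n i] that by blast
    define W where "W = B - (\<Union>n. R n)"
    have xW: "x \<in> W"
      unfolding W_def using B(3) j0 Aprop(2)[of j0] RA by blast
    have WB: "W \<subseteq> B" unfolding W_def by blast
    have Wopen: "openin X W"
      unfolding openin_subopen[of X W]
    proof
      fix y assume yW: "y \<in> W"
      then obtain i where i: "y \<in> e i" using ecov W_def by blast
      define T where "T = e i - \<Union>(R ` {..<i})"
      have "openin X T" unfolding T_def
        by (intro openin_diff eopen closedin_Union) (use Rclosed in auto)
      moreover have "y \<in> T" using yW i unfolding T_def W_def by blast
      moreover have "T \<subseteq> W"
      proof
        fix z assume z: "z \<in> T"
        have "z \<in> B" using z Aprop[of i] unfolding T_def by blast
        moreover have "z \<notin> R n" for n
        proof (cases "n < i")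
          case True then show ?thesis using z unfolding T_def by blast
        next
          case False then show ?thesis using z RA[of i n] Aprop(2)[of i] unfolding T_def by auto
        qed
        ultimately show "z \<in> W" unfolding W_def by blast
      qed
      ultimately show "\<exists>T. openin X T \<and> y \<in> T \<and> T \<subseteq> W" by blast
    qed
    have Wclosed: "closedin X W"
      unfolding closedin_def
    proof
      show "W \<subseteq> topspace X" using WB B(1) openin_subset by blast
      show "openin X (topspace X - W)"
        unfolding openin_subopen[of X "topspace X - W"]
      proof
        fix y assume y: "y \<in> topspace X - W"
        show "\<exists>T. openin X T \<and> y \<in> T \<and> T \<subseteq> topspace X - W"
        proof (cases "\<exists>n. y \<in> R n")
          case True
          then obtain n where "y \<in> R n" by blast
          moreover have "R n \<subseteq> topspace X - W" using Ropen[of n] openin_subset unfolding W_def by blast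
          ultimately show ?thesis using Ropen by blast
        next
          case False
          then have yB: "y \<notin> B" using y W_def by blast
          have "y \<notin> X frontier_of B" using False KR Kfr by blast
          then have ycl: "y \<notin> X closure_of B"
            using yB B(1) by (simp add: frontier_of_def interior_of_openin)
          have "openin X (topspace X - X closure_of B)" by (rule openin_diff) auto
          moreover have "topspace X - X closure_of B \<subseteq> topspace X - W"
          proof -
            have "B \<subseteq> X closure_of B" by (rule closure_of_subset[OF openin_subset[OF B(1)]])
            then show ?thesis using WB by blast
          qed
          ultimately show ?thesis using y ycl by blast
        qed
      qed
    qed
    show "\<exists>U' V. openin X U' \<and> (closedin X V \<and> openin X V) \<and> x \<in> U' \<and> U' \<subseteq> V \<and> V \<subseteq> U"
      using Wopen Wclosed xW WB B(4) by blast
  qed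
qed

end
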